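(* Let $n\ge 3$, let $A_1\ldots A_n$ be a regular $n$-gon in the coordinate plane with center $O$ of abscissa $o$ and circumradius $R$, and let $f(x)$ be a real polynomial of degree $n$ whose roots, counted with multiplicity, are the abscissas of $A_1,\ldots,A_n$. Consider all circles centered at $O$ that are tangent to some segment $A_iA_j$ ($i\ne j$, sides included) not passing through $O$; these are the circles $\omega_k$ of radius $R\cos(\pi k/n)$, $k=1,\ldots,\lfloor (n-1)/2\rfloor$ (with $\omega_1$ the inscribed circle). Then for each such circle, exactly two of the vertical lines through the roots of $f'$ are tangent to it; that is, $o\pm R\cos(\pi k/n)$ are roots of $f'$ for each $k=1,\ldots,\lfloor (n-1)/2\rfloor$. When $n$ is even, the one remaining root of $f'$ is $o$ (the corresponding vertical line passes through $O$).
   Context: "Vertical" means parallel to the ordinate axis. *)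

theory Defs
  imports "HOL-Analysis.Analysis" "HOL-Computational_Algebra.Polynomial"
begin

definition regular_polygon :: "nat \<Rightarrow> real \<times> real \<Rightarrow> real \<Rightarrow> (nat \<Rightarrow> real \<times> real) \<Rightarrow> bool" where
  "regular_polygon n C R A \<longleftrightarrow> R > 0 \<and>
     (\<exists>\<theta> \<sigma>. (\<sigma> = 1 \<or> \<sigma> = -1) \<and>
        (\<forall>j<n. A j = (fst C + R * cos (\<theta> + \<sigma> * 2 * pi * real j / real n),
                       snd C + R * sin (\<theta> + \<sigma> * 2 * pi * real j / real n))))"

end

theory Submission
  imports Defs
begin


lemma prod_lin_monic:
  fixes M :: "'a::idom multiset"
  shows "lead_coeff (\<Prod>a\<in>#M. [:-a,1:]) = 1 \<and> degree (\<Prod>a\<in>#M. [:-a,1:]) = size M"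
proof (induction M)
  case empty then show ?case by simp
next
  case (add x M)
  have e: "(\<Prod>a\<in>#add_mset x M. [:-a,1:]) = [:-x,1:] * (\<Prod>a\<in>#M. [:-a,1:])" by simp
  have nz: "(\<Prod>a\<in>#M. [:-a,1:]) \<noteq> 0" using add by auto
  have l1: "lead_coeff [:-x,1:] = 1" "degree [:-x,1:] = 1" by simp_all
  have "lead_coeff ([:-x,1:] * (\<Prod>a\<in>#M. [:-a,1:])) = 1"
    using add.IH l1(1) lead_coeff_mult by (metis mult_1)
  moreover have "degree ([:-x,1:] * (\<Prod>a\<in>#M. [:-a,1:])) = size (add_mset x M)"
    using add l1 nz by (subst degree_mult_eq) auto
  ultimately show ?case unfolding e by blast
qed

lemma mset_dvd:
  fixes M :: "'a::idom multiset"
  assumes "p \<noteq> 0" "\<And>a. count M a \<le> order a p"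
  shows "(\<Prod>a\<in>#M. [:-a,1:]) dvd p"
  using assms
proof (induction M arbitrary: p)
  case empty then show ?case by simp
next
  case (add x M)
  have "order x p \<ge> 1" using add.prems(2)[of x] by simp
  then have "[:-x,1:]^1 dvd p" using order_divides by blast
  then obtain h where h: "p = [:-x,1:] * h" by auto
  have h0: "h \<noteq> 0" using h add.prems(1) by auto
  have "count M a \<le> order a h" for a
  proof -
    have "order a p = order a [:-x,1:] + order a h"
      using h add.prems(1) order_mult by (metis)
    moreover have "order a [:-x,1:] = (if a = x then 1 else 0)"
    proof (cases "a = x")
      case True then show ?thesis using order_power_n_n[of x 1] by simp
    next
      case False then show ?thesis by (simp add: order_0I)
    qed
    ultimately show ?thesis using add.prems(2)[of a] by (auto split: if_splits)
  qed
  then have "(\<Prod>a\<in>#M. [:-a,1:]) dvd h" using add.IH h0 by blast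
  moreover have "(\<Prod>a\<in>#add_mset x M. [:-a,1:]) = [:-x,1:] * (\<Prod>a\<in>#M. [:-a,1:])" by simp
  ultimately show ?case by (subst h) (simp only: mult_dvd_mono[OF dvd_refl])
qed

lemma mset_factor:
  fixes M :: "'a::idom multiset"
  assumes "p \<noteq> 0" "\<And>a. count M a \<le> order a p" "degree p = size M"
  shows "p = smult (lead_coeff p) (\<Prod>a\<in>#M. [:-a,1:])"
proof -
  define q where "q = (\<Prod>a\<in>#M. [:-a,1:])"
  have q: "lead_coeff q = 1" "degree q = size M" using prod_lin_monic[of M] q_def by auto
  have q0: "q \<noteq> 0" using q by auto
  obtain r where r: "p = q * r" using mset_dvd[OF assms(1,2)] q_def by (auto elim: dvdE)
  have r0: "r \<noteq> 0" using r assms(1) by auto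
  have "degree p = degree q + degree r" using r q0 r0 degree_mult_eq by blast
  then have "degree r = 0" using q assms(3) by simp
  then have "r = [:lead_coeff r:]" by (metis degree_0_id)
  moreover have "lead_coeff p = lead_coeff r" using r q by (simp add: lead_coeff_mult)
  ultimately show ?thesis using r q_def by (metis mult.commute mult.right_neutral mult_smult_left smult_one)
qed


lemma cis_factor: "(cis a - cis b) * (cis a - cis (-b)) = 2 * cis a * complex_of_real (cos a - cos b)"
proof -
  have s: "sin a ^ 2 = 1 - cos a ^ 2" "sin b ^ 2 = 1 - cos b ^ 2" by (simp_all add: sin_squared_eq)
  show ?thesis unfolding cis.ctr by (simp add: complex_eq_iff algebra_simps Re_power2 Im_power2 s)
qed

lemma inj_cis:
  assumes "n > 0" "s = 1 \<or> s = -1"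
  shows "inj_on (\<lambda>j. cis (s*2*pi*real j/real n)) {..<n}"
    "\<And>j. cis (s*2*pi*real j/real n) ^ n = 1"
proof -
  have b: "inj_on (\<lambda>j. cis (2*pi*real j/real n)) {..<n}"
    using Complex.bij_betw_roots_unity[OF assms(1)] by (simp add: bij_betw_def)
  show "inj_on (\<lambda>j. cis (s*2*pi*real j/real n)) {..<n}"
  proof (cases "s = 1")
    case True then show ?thesis using b by simp
  next
    case False then have "s = -1" using assms by auto
    then have e: "(\<lambda>j. cis (s*2*pi*real j/real n)) = cnj \<circ> (\<lambda>j. cis (2*pi*real j/real n))"
      by (auto simp: fun_eq_iff cis_cnj)
    show ?thesis unfolding e by (rule comp_inj_on[OF b]) (auto intro: inj_onI)
  qed
  fix j
  have "cis (s*2*pi*real j/real n) ^ n = cis (real n * (s*2*pi*real j/real n))" by (rule Complex.DeMoivre)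
  also have "real n * (s*2*pi*real j/real n) = 2*pi*(s*real j)" using assms by simp
  also have "cis (2*pi*(s*real j)) = 1"
  proof -
    have "s * real j = of_int (if s = 1 then int j else - int j)" using assms by auto
    then show ?thesis by (simp add: cis.ctr complex_eq_iff)
  qed
  finally show "cis (s*2*pi*real j/real n) ^ n = 1" .
qed

lemma prod_roots:
  fixes u :: "nat \<Rightarrow> complex"
  assumes n: "n > 0" and inj: "inj_on u {..<n}" and un: "\<And>j. j < n \<Longrightarrow> u j ^ n = 1"
  shows "(\<Prod>j<n. z - w * u j) = z^n - w^n"
proof (cases "w = 0")
  case True then show ?thesis using n by simp
next
  case False
  define p :: "complex poly" where "p = monom 1 n + [:-(w^n):]"
  define M where "M = image_mset (\<lambda>j. w * u j) (mset_set {..<n})"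
  have dp: "degree p = n" using n by (simp add: p_def degree_add_eq_left degree_monom_eq)
  have lp: "lead_coeff p = 1" using n dp by (cases n) (simp_all add: p_def)
  have p0: "p \<noteq> 0" using dp n by auto
  have pp: "poly p x = x^n - w^n" for x by (simp add: p_def poly_monom)
  have injw: "inj_on (\<lambda>j. w * u j) {..<n}" using inj False by (auto simp: inj_on_def)
  have cnt: "count M a \<le> order a p" for a
  proof -
    have c: "count M a = card {j \<in> {..<n}. w * u j = a}"
      unfolding M_def by (rule count_image_mset_eq_card_vimage) simp
    show ?thesis
    proof (cases "\<exists>j<n. w * u j = a")
      case False then have "{j \<in> {..<n}. w * u j = a} = {}" by auto
      then have "card {j \<in> {..<n}. w * u j = a} = 0" by (simp only: card.empty)
      with c show ?thesis by linarith
    next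
      case True
      then obtain j where j: "j < n" "w * u j = a" by auto
      have "{j \<in> {..<n}. w * u j = a} = {j}" using j injw by (auto simp: inj_on_def)
      then have "count M a = 1" using c by simp
      moreover have "poly p a = 0" using j(1) un[of j] by (simp add: pp power_mult_distrib flip: j(2))
      then have "order a p \<noteq> 0" using p0 order_root by blast
      ultimately show ?thesis by simp
    qed
  qed
  have sM: "size M = n" by (simp add: M_def)
  have "p = smult (lead_coeff p) (\<Prod>a\<in>#M. [:-a,1:])"
    by (rule mset_factor[OF p0 cnt]) (simp add: dp sM)
  then have "poly p z = poly (\<Prod>a\<in>#M. [:-a,1:]) z" using lp by simp
  also have "\<dots> = (\<Prod>j<n. z - w * u j)"
    by (simp add: M_def poly_prod_mset prod_unfold_prod_mset image_mset.compositionality o_def)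
  finally show ?thesis using pp by simp
qed


lemma trig_prod:
  assumes n: "n > 0" and sg: "\<sigma> = 1 \<or> \<sigma> = -1"
  shows "2^n * (\<Prod>j<n. cos \<phi> - cos (\<theta> + \<sigma>*2*pi*real j/real n)) = 2 * (cos (real n*\<phi>) - cos (real n*\<theta>))"
proof -
  define \<alpha> where "\<alpha> j = \<theta> + \<sigma>*2*pi*real j/real n" for j
  define u where "u j = cis (\<sigma>*2*pi*real j/real n)" for j
  define v where "v j = cis ((-\<sigma>)*2*pi*real j/real n)" for j
  define z where "z = cis \<phi>"
  define P where "P = (\<Prod>j<n. cos \<phi> - cos (\<alpha> j))"
  have sg': "-\<sigma> = 1 \<or> -\<sigma> = -1" using sg by auto
  have fac: "(z - cis \<theta> * u j) * (z - cis (-\<theta>) * v j) = 2 * z * complex_of_real (cos \<phi> - cos (\<alpha> j))" for j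
  proof -
    have "cis \<theta> * u j = cis (\<alpha> j)" by (simp add: u_def \<alpha>_def cis_mult)
    moreover have "cis (-\<theta>) * v j = cis (-\<alpha> j)" by (simp add: v_def \<alpha>_def cis_mult)
    ultimately show ?thesis unfolding z_def using cis_factor by simp
  qed
  have p1: "(\<Prod>j<n. z - cis \<theta> * u j) = z^n - cis \<theta> ^ n"
    using inj_cis[OF n sg] unfolding u_def by (intro prod_roots[OF n]) auto
  have p2: "(\<Prod>j<n. z - cis (-\<theta>) * v j) = z^n - cis (-\<theta>) ^ n"
    using inj_cis[OF n sg'] unfolding v_def by (intro prod_roots[OF n]) auto
  have "(\<Prod>j<n. (z - cis \<theta> * u j) * (z - cis (-\<theta>) * v j)) = (z^n - cis \<theta> ^ n) * (z^n - cis (-\<theta>) ^ n)"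
    using p1 p2 by (simp add: prod.distrib)
  also have "\<dots> = (cis (real n*\<phi>) - cis (real n*\<theta>)) * (cis (real n*\<phi>) - cis (-(real n*\<theta>)))"
    unfolding z_def by (simp add: Complex.DeMoivre)
  also have "\<dots> = 2 * z^n * complex_of_real (cos (real n*\<phi>) - cos (real n*\<theta>))"
    unfolding z_def by (simp add: cis_factor Complex.DeMoivre)
  finally have A: "(\<Prod>j<n. (z - cis \<theta> * u j) * (z - cis (-\<theta>) * v j)) = 2 * z^n * complex_of_real (cos (real n*\<phi>) - cos (real n*\<theta>))" .
  have "(\<Prod>j<n. (z - cis \<theta> * u j) * (z - cis (-\<theta>) * v j)) = (\<Prod>j<n. 2 * z * complex_of_real (cos \<phi> - cos (\<alpha> j)))"
    using fac by simp
  also have "\<dots> = (2*z)^n * complex_of_real P"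
    by (simp add: prod.distrib P_def)
  finally have B: "(2*z)^n * complex_of_real P = 2 * z^n * complex_of_real (cos (real n*\<phi>) - cos (real n*\<theta>))"
    using A by metis
  have z0: "z^n \<noteq> 0" by (simp add: z_def)
  have z1: "z \<noteq> 0" by (simp add: z_def)
  have "complex_of_real (2^n * P) = complex_of_real (2 * (cos (real n*\<phi>) - cos (real n*\<theta>)))"
  proof -
    have "z = 0 \<and> 0 < n \<or> 2 * complex_of_real (cos (real n * \<phi>)) - 2 * complex_of_real (cos (real n * \<theta>)) = 2 ^ n * complex_of_real P"
      using B by (simp add: power_mult_distrib mult_ac) (metis)
    then show ?thesis using z1 by simp
  qed
  then show ?thesis unfolding P_def \<alpha>_def of_real_eq_iff .
qed
lemma ang_bounds:
  assumes "k \<le> n" "0 < n"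
  shows "0 \<le> pi * real k / real n" "pi * real k / real n \<le> pi"
proof -
  have "real k / real n \<le> 1" using assms by simp
  then have "pi * (real k / real n) \<le> pi * 1" by (intro mult_left_mono) auto
  then show "pi * real k / real n \<le> pi" by simp
  show "0 \<le> pi * real k / real n" by simp
qed

theorem theorem2:
  fixes n :: nat and C :: "real \<times> real" and R :: real
    and A :: "nat \<Rightarrow> real \<times> real" and f :: "real poly"
  assumes "n \<ge> 3"
    and "regular_polygon n C R A"
    and "degree f = n"
    and "\<And>a. order a f = card {j. j < n \<and> fst (A j) = a}"
  shows "(\<forall>k\<in>{1..(n - 1) div 2}.
            poly (pderiv f) (fst C + R * cos (pi * real k / real n)) = 0 \<and>
            poly (pderiv f) (fst C - R * cos (pi * real k / real n)) = 0)
       \<and> {x. poly (pderiv f) x = 0} =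
            {fst C + R * cos (pi * real k / real n) | k. k \<in> {1..(n - 1) div 2}}
            \<union> {fst C - R * cos (pi * real k / real n) | k. k \<in> {1..(n - 1) div 2}}
            \<union> (if even n then {fst C} else {})"
proof -
  define ox where "ox = fst C"
  have n0: "n > 0" using assms(1) by simp
  obtain \<theta> \<sigma> where R0: "R > 0" and sg: "\<sigma> = 1 \<or> \<sigma> = -1"
    and Aj: "\<And>j. j < n \<Longrightarrow> fst (A j) = ox + R * cos (\<theta> + \<sigma> * 2 * pi * real j / real n)"
    using assms(2) unfolding regular_polygon_def ox_def by fastforce
  define x where "x j = ox + R * cos (\<theta> + \<sigma> * 2 * pi * real j / real n)" for j
  have f0: "f \<noteq> 0" using assms(1,3) by auto
  define M where "M = image_mset x (mset_set {..<n})"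
  have cnt: "count M a \<le> order a f" for a
  proof -
    have "count M a = card {j \<in> {..<n}. x j = a}"
      unfolding M_def by (rule count_image_mset_eq_card_vimage) simp
    also have "{j \<in> {..<n}. x j = a} = {j. j < n \<and> fst (A j) = a}"
      using Aj by (auto simp: x_def)
    finally show ?thesis using assms(4) by simp
  qed
  have "f = smult (lead_coeff f) (\<Prod>a\<in>#M. [:-a,1:])"
    by (rule mset_factor[OF f0 cnt]) (simp add: M_def assms(3))
  then have pf: "poly f y = lead_coeff f * (\<Prod>j<n. y - x j)" for y
    by (subst (asm) poly_eq_poly_eq_iff[symmetric])
       (simp add: M_def poly_prod_mset prod_unfold_prod_mset image_mset.compositionality o_def)
  define c where "c = lead_coeff f"
  define K where "K = c * R^n * 2 / 2^n"
  have fphi: "poly f (ox + R * cos \<phi>) = K * (cos (real n * \<phi>) - cos (real n * \<theta>))" for \<phi>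
  proof -
    have "poly f (ox + R * cos \<phi>) = c * (\<Prod>j<n. R * (cos \<phi> - cos (\<theta> + \<sigma> * 2 * pi * real j / real n)))"
      unfolding pf c_def by (simp add: x_def algebra_simps)
    also have "\<dots> = c * R^n * (\<Prod>j<n. cos \<phi> - cos (\<theta> + \<sigma> * 2 * pi * real j / real n))"
      by (simp add: prod.distrib)
    also have "\<dots> = c * R^n * (2 * (cos (real n*\<phi>) - cos (real n*\<theta>)) / 2^n)"
      by (simp only: trig_prod[OF n0 sg, of \<phi> \<theta>, symmetric]) simp
    finally show ?thesis by (simp add: K_def)
  qed
  have droot: "poly (pderiv f) (ox + R * cos (pi * real k / real n)) = 0" if k: "1 \<le> k" "k < n" for k
  proof -
    define \<phi> where "\<phi> = pi * real k / real n"
    have d1: "((\<lambda>t. poly f (ox + R * cos t)) has_real_derivative poly (pderiv f) (ox + R * cos \<phi>) * (- R * sin \<phi>)) (at \<phi>)"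
      by (rule DERIV_chain2[OF poly_DERIV]) (auto intro!: derivative_eq_intros)
    have d2: "((\<lambda>t. poly f (ox + R * cos t)) has_real_derivative K * (- sin (real n * \<phi>) * real n)) (at \<phi>)"
      unfolding fphi by (auto intro!: derivative_eq_intros)
    have e: "poly (pderiv f) (ox + R * cos \<phi>) * (- R * sin \<phi>) = K * (- sin (real n * \<phi>) * real n)"
      using DERIV_unique[OF d1 d2] .
    have "real n * \<phi> = real k * pi" using n0 by (simp add: \<phi>_def)
    then have "sin (real n * \<phi>) = 0" by simp
    moreover have "sin \<phi> > 0" unfolding \<phi>_def
      using k n0 by (intro sin_gt_zero) (auto simp: field_simps)
    ultimately show ?thesis using e R0 unfolding \<phi>_def by simp
  qed
  define g where "g k = ox + R * cos (pi * real k / real n)" for k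
  define S where "S = g ` {1..n-1}"
  define Z where "Z = {x. poly (pderiv f) x = 0}"
  have refl: "g (n - k) = ox - R * cos (pi * real k / real n)" if "k \<le> n" for k
  proof -
    have "pi * real (n - k) / real n = pi - pi * real k / real n"
      using that n0 by (simp add: of_nat_diff field_simps)
    then show ?thesis by (simp add: g_def cos_pi_minus)
  qed
  have injg: "inj_on g {1..n-1}"
  proof (rule inj_onI)
    fix k l assume kl: "k \<in> {1..n-1}" "l \<in> {1..n-1}" "g k = g l"
    then have "cos (pi * real k / real n) = cos (pi * real l / real n)" using R0 by (simp add: g_def)
    moreover have kn: "k \<le> n" "l \<le> n" using kl(1,2) by auto
    ultimately have "pi * real k / real n = pi * real l / real n"
      using cos_inj_pi[OF ang_bounds(1)[OF kn(1) n0] ang_bounds(2)[OF kn(1) n0]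
                          ang_bounds(1)[OF kn(2) n0] ang_bounds(2)[OF kn(2) n0]] by blast
    then show "k = l" using n0 by simp
  qed
  have cS: "card S = n - 1" unfolding S_def using card_image[OF injg] by simp
  have dp: "degree (pderiv f) = n - 1" using assms(3) by (simp add: degree_pderiv)
  have p0: "pderiv f \<noteq> 0"
  proof
    assume "pderiv f = 0"
    then have "degree (pderiv f) = 0" by simp
    then show False using dp assms(1) by simp
  qed
  have fZ: "finite Z" unfolding Z_def using poly_roots_finite[OF p0] .
  have cZ: "card Z \<le> n - 1" unfolding Z_def using card_poly_roots_bound[OF p0] dp by simp
  have SZ: "S \<subseteq> Z" unfolding S_def Z_def g_def using droot by auto
  have SeqZ: "S = Z" using card_seteq[OF fZ SZ] cZ cS by simp
  have half: "(n - 1) div 2 < n" using n0 by simp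
  have part1: "\<forall>k\<in>{1..(n - 1) div 2}.
            poly (pderiv f) (fst C + R * cos (pi * real k / real n)) = 0 \<and>
            poly (pderiv f) (fst C - R * cos (pi * real k / real n)) = 0"
  proof
    fix k assume k: "k \<in> {1..(n - 1) div 2}"
    then have "k < n" using half by auto
    then show "poly (pderiv f) (fst C + R * cos (pi * real k / real n)) = 0 \<and>
            poly (pderiv f) (fst C - R * cos (pi * real k / real n)) = 0"
      using droot[of k] droot[of "n-k"] refl[of k] k unfolding ox_def g_def by auto
  qed
  have "Z = {fst C + R * cos (pi * real k / real n) | k. k \<in> {1..(n - 1) div 2}}
            \<union> {fst C - R * cos (pi * real k / real n) | k. k \<in> {1..(n - 1) div 2}}
            \<union> (if even n then {fst C} else {})" (is "Z = ?P \<union> ?M \<union> ?E")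
  proof
    show "Z \<subseteq> ?P \<union> ?M \<union> ?E"
    proof
      fix y assume "y \<in> Z"
      then obtain k where k: "k \<in> {1..n-1}" "y = g k" using SeqZ S_def by auto
      consider "2 * k < n" | "2 * k > n" | "2 * k = n" by linarith
      then show "y \<in> ?P \<union> ?M \<union> ?E"
      proof cases
        case 1
        then have "k \<in> {1..(n - 1) div 2}" using k by auto
        then show ?thesis using k unfolding g_def ox_def by blast
      next
        case 2
        then have "n - k \<in> {1..(n - 1) div 2}" using k by auto
        moreover have "y = fst C - R * cos (pi * real (n - k) / real n)"
          using refl[of "n-k"] k unfolding ox_def by auto
        ultimately show ?thesis by blast
      next
        case 3
        then have ev: "even n" by auto
        have "pi * real k / real n = pi / 2" using 3 n0
          by (simp add: field_simps)
        then have "cos (pi * real k / real n) = 0" by (simp only: cos_pi_half)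
        then have "y = fst C" using k unfolding g_def ox_def by simp
        then show ?thesis using ev by simp
      qed
    qed
  next
    show "?P \<union> ?M \<union> ?E \<subseteq> Z"
    proof -
      have "?P \<subseteq> S"
      proof
        fix y assume "y \<in> ?P"
        then obtain k where "k \<in> {1..(n - 1) div 2}" "y = g k" unfolding g_def ox_def by auto
        then show "y \<in> S" unfolding S_def using half by auto
      qed
      moreover have "?M \<subseteq> S"
      proof
        fix y assume "y \<in> ?M"
        then obtain k where k: "k \<in> {1..(n - 1) div 2}" "y = ox - R * cos (pi * real k / real n)"
          unfolding ox_def by auto
        then have "y = g (n - k)" "n - k \<in> {1..n-1}" using refl[of k] half by auto
        then show "y \<in> S" unfolding S_def by auto
      qed
      moreover have "?E \<subseteq> S"
      proof (cases "even n")
        case True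
        then obtain m where m: "n = 2 * m" by auto
        then have "m \<in> {1..n-1}" using assms(1) by auto
        moreover have "g m = fst C"
        proof -
          have "pi * real m / real n = pi / 2" using m n0 by (simp add: field_simps)
          then have "cos (pi * real m / real n) = 0" by (simp only: cos_pi_half)
          then show ?thesis by (simp add: g_def ox_def)
        qed
        ultimately show ?thesis using True unfolding S_def by (simp add: image_iff) (metis atLeastAtMost_iff One_nat_def)
      qed simp
      ultimately show ?thesis using SeqZ by auto
    qed
  qed
  then show ?thesis using part1 Z_def by simp
qed

end
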